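(* Let $\mathcal{G}$ be an anonymous polymatrix $N$-player game with common action set $\mathbb{A}$, and let $\bar r^i$ be the functions with $r^i(a^i,a^{-i})=\bar r^i(a^i,\sigma(a^{-i}))$. Let $(\alpha_k)_{k\ge1}$ be any step-size sequence in $(0,1]$ and let $(a_l)_{l\ge0}$ be any sequence of joint actions in $\mathbb{A}^{\otimes N}$. Define, for all $i,j\in[N]$, $\hat\pi^j_0=\mathds{1}\{a^j_0\}$, $\hat\pi^j_k=\hat\pi^j_{k-1}+\alpha_k(\mathds{1}\{a^j_k\}-\hat\pi^j_{k-1})$, and $\hat\mu^i_0=\mathds{1}\{\sigma(a^{-i}_0)\}$, $\hat\mu^i_k=\hat\mu^i_{k-1}+\alpha_k(\mathds{1}\{\sigma(a^{-i}_k)\}-\hat\mu^i_{k-1})$ for $k\ge1$. Then for every $k\ge0$, every agent $i$ and every $a^i\in\mathbb{A}$, $$\bar R^i(a^i,\hat\mu^i_k)=R^i(a^i,\hat\pi^{-i}_k).$$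
   Context: A game is polymatrix if for each $i$ there are functions $r^{ij}:\mathbb{A}^i\times\mathbb{A}^j\to\mathbb{R}$, $j\neq i$, with $r^i(a^i,a^{-i})=\sum_{j\neq i}r^{ij}(a^i,a^j)$ for all $a$. Anonymous: common action set $\mathbb{A}$ ($|\mathbb{A}|=n$), each $r^i(a^i,a^{-i})$ invariant under permutations of $a^{-i}$. $\mathds{1}\{y\}$ denotes the basis vector indexed by $y$ (in $\mathbb{R}^n$ for $y\in\mathbb{A}$, in $\mathbb{R}^{|\mathbb{X}|}$ for $y\in\mathbb{X}$). $\sigma(a^{-i}):=\sum_{j\neq i}\mathds{1}\{a^j\}\in\mathbb{X}:=\{\xi\in\mathbb{N}^n:\sum_l\xi_l=N-1\}$. $R^i(a^i,\pi^{-i}):=\sum_{a^{-i}}r^i(a^i,a^{-i})\prod_{j\ne i}\pi^j(a^j)$ and $\bar R^i(a^i,\mu):=\sum_{x\in\mathbb{X}}\bar r^i(a^i,x)\mu(x)$. *)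

theory Defs
  imports Complex_Main "HOL-Combinatorics.Permutations"
begin

(* Players are 0..N-1; a joint action is a function nat => 'a (only values below N matter);
   'a is the common finite action set. *)

definition basis :: "'b \<Rightarrow> 'b \<Rightarrow> real" where
  "basis y = (\<lambda>z. if z = y then 1 else 0)"

definition sigma :: "nat \<Rightarrow> nat \<Rightarrow> (nat \<Rightarrow> 'a) \<Rightarrow> ('a \<Rightarrow> nat)" where
  "sigma N i a = (\<lambda>l. card {j. j < N \<and> j \<noteq> i \<and> a j = l})"

definition Xset :: "nat \<Rightarrow> ('a::finite \<Rightarrow> nat) set" where
  "Xset N = {\<xi>. (\<Sum>l\<in>UNIV. \<xi> l) = N - 1}"

definition polymatrix :: "nat \<Rightarrow> (nat \<Rightarrow> (nat \<Rightarrow> 'a) \<Rightarrow> real) \<Rightarrow> bool" where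
  "polymatrix N r \<longleftrightarrow> (\<exists>rij :: nat \<Rightarrow> nat \<Rightarrow> 'a \<Rightarrow> 'a \<Rightarrow> real.
      \<forall>i<N. \<forall>a. r i a = (\<Sum>j\<in>{..<N} - {i}. rij i j (a i) (a j)))"

definition anonymous :: "nat \<Rightarrow> (nat \<Rightarrow> (nat \<Rightarrow> 'a) \<Rightarrow> real) \<Rightarrow> bool" where
  "anonymous N r \<longleftrightarrow> (\<forall>i<N. \<forall>p a. p permutes ({..<N} - {i}) \<longrightarrow> r i (a \<circ> p) = r i a)"

definition Rmix :: "nat \<Rightarrow> (nat \<Rightarrow> (nat \<Rightarrow> 'a) \<Rightarrow> real) \<Rightarrow> nat \<Rightarrow> 'a
                    \<Rightarrow> (nat \<Rightarrow> 'a \<Rightarrow> real) \<Rightarrow> real" where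
  "Rmix N r i ai \<pi> = (\<Sum>b\<in>PiE ({..<N} - {i}) (\<lambda>_. UNIV).
       r i (b(i := ai)) * (\<Prod>j\<in>{..<N} - {i}. \<pi> j (b j)))"

definition Rbar :: "nat \<Rightarrow> (nat \<Rightarrow> 'a::finite \<Rightarrow> ('a \<Rightarrow> nat) \<Rightarrow> real) \<Rightarrow> nat \<Rightarrow> 'a
                    \<Rightarrow> (('a \<Rightarrow> nat) \<Rightarrow> real) \<Rightarrow> real" where
  "Rbar N rbar i ai \<mu> = (\<Sum>x\<in>Xset N. rbar i ai x * \<mu> x)"

(* act k j = a^j_k *)
primrec pihat :: "(nat \<Rightarrow> real) \<Rightarrow> (nat \<Rightarrow> nat \<Rightarrow> 'a) \<Rightarrow> nat \<Rightarrow> nat \<Rightarrow> 'a \<Rightarrow> real" where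
  "pihat \<alpha> act j 0 = basis (act 0 j)"
| "pihat \<alpha> act j (Suc k) = (\<lambda>y. pihat \<alpha> act j k y
      + \<alpha> (Suc k) * (basis (act (Suc k) j) y - pihat \<alpha> act j k y))"

primrec muhat :: "nat \<Rightarrow> (nat \<Rightarrow> real) \<Rightarrow> (nat \<Rightarrow> nat \<Rightarrow> 'a) \<Rightarrow> nat \<Rightarrow> nat
                  \<Rightarrow> ('a \<Rightarrow> nat) \<Rightarrow> real" where
  "muhat N \<alpha> act i 0 = basis (sigma N i (act 0))"
| "muhat N \<alpha> act i (Suc k) = (\<lambda>x. muhat N \<alpha> act i k x
      + \<alpha> (Suc k) * (basis (sigma N i (act (Suc k))) x - muhat N \<alpha> act i k x))"

end

theory Submission
  imports Defs
begin

lemma sigma_upd: "i < N \<Longrightarrow> sigma N i (a(i := x)) = sigma N i a"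
  unfolding sigma_def by (intro ext arg_cong[where f=card]) auto

lemma sigma_in_Xset:
  fixes a :: "nat \<Rightarrow> 'a::finite"
  assumes "i < N" shows "sigma N i a \<in> Xset N"
proof -
  let ?S = "{..<N} - {i}"
  have "(\<Sum>l\<in>UNIV. sigma N i a l) = (\<Sum>l\<in>(UNIV::'a set). \<Sum>j\<in>?S. if a j = l then 1 else (0::nat))"
  proof (intro sum.cong refl)
    fix l
    have "(\<Sum>j\<in>?S. if a j = l then 1 else (0::nat)) = card {j\<in>?S. a j = l}"
      by (simp add: sum.inter_filter[symmetric])
    also have "{j\<in>?S. a j = l} = {j. j < N \<and> j \<noteq> i \<and> a j = l}" by auto
    finally show "sigma N i a l = (\<Sum>j\<in>?S. if a j = l then 1 else (0::nat))"
      unfolding sigma_def by simp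
  qed
  also have "\<dots> = (\<Sum>j\<in>?S. \<Sum>l\<in>(UNIV::'a set). if a j = l then 1 else (0::nat))"
    by (rule sum.swap)
  also have "\<dots> = card ?S" by simp
  also have "\<dots> = N - 1" using assms by simp
  finally show ?thesis unfolding Xset_def by simp
qed

lemma finite_Xset: "finite (Xset N :: ('a::finite \<Rightarrow> nat) set)"
proof -
  have "Xset N \<subseteq> PiE (UNIV::'a set) (\<lambda>_. {..N-1})"
  proof
    fix \<xi> :: "'a \<Rightarrow> nat" assume "\<xi> \<in> Xset N"
    hence s: "(\<Sum>l\<in>UNIV. \<xi> l) = N - 1" unfolding Xset_def by simp
    have "\<xi> l \<le> N - 1" for l
      using member_le_sum[of l UNIV \<xi>] s by simp
    thus "\<xi> \<in> PiE (UNIV::'a set) (\<lambda>_. {..N-1})" by auto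
  qed
  moreover have "finite (PiE (UNIV::'a set) (\<lambda>_. {..N-1}))"
    by (intro finite_PiE) auto
  ultimately show ?thesis by (rule finite_subset)
qed

lemma Rbar_basis:
  assumes "x \<in> Xset N"
  shows "Rbar N rbar i ai (basis x) = rbar i ai x"
proof -
  have "Rbar N rbar i ai (basis x) = (\<Sum>y\<in>Xset N. if y = x then rbar i ai x else 0)"
    unfolding Rbar_def basis_def by (intro sum.cong refl) auto
  also have "\<dots> = rbar i ai x"
    using sum.delta[OF finite_Xset[of N], of x "\<lambda>_. rbar i ai x"] assms by simp
  finally show ?thesis .
qed

lemma Rbar_lin:
  "Rbar N rbar i ai (\<lambda>x. \<mu> x + c * (\<nu> x - \<mu> x)) =
   Rbar N rbar i ai \<mu> + c * (Rbar N rbar i ai \<nu> - Rbar N rbar i ai \<mu>)"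
  unfolding Rbar_def
  by (simp add: algebra_simps sum.distrib sum_distrib_left sum_subtractf)

lemma pihat_sum: "(\<Sum>y\<in>UNIV. pihat \<alpha> act j k (y::'a::finite)) = 1"
proof (induction k)
  case 0 then show ?case by (simp add: basis_def)
next
  case (Suc k)
  have b: "(\<Sum>y\<in>UNIV. basis (act (Suc k) j) (y::'a)) = 1" by (simp add: basis_def)
  show ?case using Suc b
    by (simp add: sum.distrib sum_distrib_left[symmetric] sum_subtractf)
qed

lemma sum_PiE_single:
  fixes \<pi> :: "nat \<Rightarrow> 'a::finite \<Rightarrow> real"
  assumes fin: "finite S" and j: "j \<in> S" and one: "\<And>m. m \<in> S \<Longrightarrow> (\<Sum>y\<in>UNIV. \<pi> m y) = 1"
  shows "(\<Sum>b\<in>PiE S (\<lambda>_. UNIV). g (b j) * (\<Prod>m\<in>S. \<pi> m (b m))) = (\<Sum>y\<in>UNIV. g y * \<pi> j y)"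
proof -
  define h where "h m y = (if m = j then g y * \<pi> j y else \<pi> m y)" for m y
  have "(\<Sum>b\<in>PiE S (\<lambda>_. UNIV). g (b j) * (\<Prod>m\<in>S. \<pi> m (b m))) =
        (\<Sum>b\<in>PiE S (\<lambda>_. UNIV). \<Prod>m\<in>S. h m (b m))"
  proof (intro sum.cong refl)
    fix b
    have "(\<Prod>m\<in>S. h m (b m)) = h j (b j) * (\<Prod>m\<in>S - {j}. h m (b m))"
      using fin j by (simp add: prod.remove)
    also have "(\<Prod>m\<in>S - {j}. h m (b m)) = (\<Prod>m\<in>S - {j}. \<pi> m (b m))"
      unfolding h_def by (intro prod.cong) auto
    also have "(\<Prod>m\<in>S. \<pi> m (b m)) = \<pi> j (b j) * (\<Prod>m\<in>S - {j}. \<pi> m (b m))"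
      using fin j by (simp add: prod.remove)
    ultimately show "g (b j) * (\<Prod>m\<in>S. \<pi> m (b m)) = (\<Prod>m\<in>S. h m (b m))"
      by (simp add: h_def)
  qed
  also have "\<dots> = (\<Prod>m\<in>S. \<Sum>y\<in>UNIV. h m y)"
    by (rule prod_sum_PiE[symmetric]) (use fin in auto)
  also have "\<dots> = (\<Sum>y\<in>UNIV. h j y) * (\<Prod>m\<in>S - {j}. \<Sum>y\<in>UNIV. h m y)"
    using fin j by (simp add: prod.remove)
  also have "(\<Prod>m\<in>S - {j}. \<Sum>y\<in>UNIV. h m y) = 1"
    using one unfolding h_def by (intro prod.neutral) auto
  finally show ?thesis by (simp add: h_def)
qed

theorem lemma3:
  fixes N :: nat
    and r :: "nat \<Rightarrow> (nat \<Rightarrow> 'a::finite) \<Rightarrow> real"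
    and rbar :: "nat \<Rightarrow> 'a \<Rightarrow> ('a \<Rightarrow> nat) \<Rightarrow> real"
    and \<alpha> :: "nat \<Rightarrow> real"
    and act :: "nat \<Rightarrow> nat \<Rightarrow> 'a"
  assumes poly: "polymatrix N r"
    and anon: "anonymous N r"
    and rbar: "\<And>i a. i < N \<Longrightarrow> r i a = rbar i (a i) (sigma N i a)"
    and step: "\<And>k. k \<ge> 1 \<Longrightarrow> 0 < \<alpha> k \<and> \<alpha> k \<le> 1"
    and i: "i < N"
  shows "Rbar N rbar i ai (muhat N \<alpha> act i k) = Rmix N r i ai (\<lambda>j. pihat \<alpha> act j k)"
proof -
  let ?S = "{..<N} - {i}"
  obtain rij :: "nat \<Rightarrow> nat \<Rightarrow> 'a \<Rightarrow> 'a \<Rightarrow> real" where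
    rij: "\<And>a. r i a = (\<Sum>j\<in>?S. rij i j (a i) (a j))"
    using poly i unfolding polymatrix_def by blast
  define F where "F \<pi> = (\<Sum>j\<in>?S. \<Sum>y\<in>UNIV. rij i j ai y * \<pi> j y)" for \<pi> :: "nat \<Rightarrow> 'a \<Rightarrow> real"
  have F_lin: "F (\<lambda>j y. p j y + c * (q j y - p j y)) = F p + c * (F q - F p)" for p q c
    unfolding F_def
    by (simp add: algebra_simps sum.distrib sum_distrib_left sum_subtractf)
  have base: "Rbar N rbar i ai (basis (sigma N i a)) = F (\<lambda>j. basis (a j))" for a :: "nat \<Rightarrow> 'a"
  proof -
    have "Rbar N rbar i ai (basis (sigma N i a)) = rbar i ai (sigma N i a)"
      using Rbar_basis sigma_in_Xset i by blast
    also have "\<dots> = r i (a(i := ai))" using rbar[OF i, of "a(i := ai)"] sigma_upd[OF i, of a ai] by simp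
    also have "\<dots> = (\<Sum>j\<in>?S. rij i j ai (a j))" using rij by simp
    also have "\<dots> = F (\<lambda>j. basis (a j))" unfolding F_def basis_def
      by (simp add: if_distrib[of "\<lambda>z. _ * z"] cong: if_cong)
    finally show ?thesis .
  qed
  have ind: "Rbar N rbar i ai (muhat N \<alpha> act i k) = F (\<lambda>j. pihat \<alpha> act j k)"
  proof (induction k)
    case 0 then show ?case using base by simp
  next
    case (Suc k)
    show ?case
      using Suc base[of "act (Suc k)"] Rbar_lin[of N rbar i ai] F_lin by simp
  qed
  have "Rmix N r i ai (\<lambda>j. pihat \<alpha> act j k) = F (\<lambda>j. pihat \<alpha> act j k)"
  proof -
    let ?p = "\<lambda>j. pihat \<alpha> act j k"
    have "Rmix N r i ai ?p = (\<Sum>b\<in>PiE ?S (\<lambda>_. UNIV). \<Sum>j\<in>?S. rij i j ai (b j) * (\<Prod>m\<in>?S. ?p m (b m)))"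
      unfolding Rmix_def rij by (intro sum.cong refl) (auto simp: sum_distrib_right intro!: sum.cong)
    also have "\<dots> = (\<Sum>j\<in>?S. \<Sum>b\<in>PiE ?S (\<lambda>_. UNIV). rij i j ai (b j) * (\<Prod>m\<in>?S. ?p m (b m)))"
      by (rule sum.swap)
    also have "\<dots> = F ?p" unfolding F_def
      by (intro sum.cong refl sum_PiE_single) (auto simp: pihat_sum)
    finally show ?thesis .
  qed
  with ind show ?thesis by simp
qed

end
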